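(* Let $n_w\ge 1$, $i\ge 0$ and $w\ge 1$ be integers, and let $c_1,\dots,c_{n_w}$ be distinct symbols (clusters). Let $G$ be the directed graph (the pruned configuration graph) whose nodes are the pairs $(idx, C)$ with $1\le idx\le n_w+1$, $C\subseteq\{c_x \mid \max(1,idx-2i-2w+1)\le x<idx\}$ and $|C|\le i+w$, and whose edges are: left edges $(idx,C)\to(idx+1,C)$ for $idx\le n_w$; right edges $(idx,C)\to(idx+1,C\cup\{c_{idx}\})$ for $idx\le n_w$ whenever the target is a node; and horizontal edges $(idx,C)\to(idx,C\setminus\{c\})$ for $c\in C$. Then $G$ has at most $(n_w+1)2^{2i+2w-1}$ nodes and at most $(i+w+1)(n_w+1)2^{2i+2w-1}$ edges.
   Context: This graph represents the states $(idx, C_{buf})$ of a search for an ordering of clusters: $idx$ is the index of the next cluster to be processed and $C$ is the set of buffered (not yet placed) clusters; left edges place $c_{idx}$, right edges buffer $c_{idx}$, horizontal edges place a buffered cluster. *)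

theory Defs
  imports Main
begin

definition window :: "nat \<Rightarrow> nat \<Rightarrow> nat \<Rightarrow> nat set" where
  "window i w idx = {x. max 1 (int idx - 2 * int i - 2 * int w + 1) \<le> int x \<and> x < idx}"

definition config_nodes :: "(nat \<Rightarrow> 'a) \<Rightarrow> nat \<Rightarrow> nat \<Rightarrow> nat \<Rightarrow> (nat \<times> 'a set) set" where
  "config_nodes c nw i w =
     {(idx, C). 1 \<le> idx \<and> idx \<le> nw + 1 \<and> C \<subseteq> c ` window i w idx \<and> card C \<le> i + w}"

definition config_edges :: "(nat \<Rightarrow> 'a) \<Rightarrow> nat \<Rightarrow> nat \<Rightarrow> nat \<Rightarrow> ((nat \<times> 'a set) \<times> (nat \<times> 'a set)) set" where
  "config_edges c nw i w =
     {((idx, C), (idx', C')). (idx, C) \<in> config_nodes c nw i w \<and> (idx', C') \<in> config_nodes c nw i w \<and>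
        ((idx \<le> nw \<and> idx' = idx + 1 \<and> C' = C) \<or>
         (idx \<le> nw \<and> idx' = idx + 1 \<and> C' = C \<union> {c idx}) \<or>
         (idx' = idx \<and> (\<exists>x\<in>C. C' = C - {x})))}"

end

theory Submission
  imports Defs
begin

lemma window_sub: "window i w idx \<subseteq> {idx + 1 - (2*i+2*w) ..< idx} \<inter> {1..}"
  unfolding window_def by auto

lemma window_fin: "finite (window i w idx)"
  by (rule finite_subset[OF _ finite_lessThan[of idx]]) (auto simp: window_def)

lemma window_card: "card (window i w idx) \<le> 2*i+2*w - 1"
proof -
  have "card (window i w idx) \<le> card {idx + 1 - (2*i+2*w) ..< idx}"
    by (rule card_mono) (use window_sub in auto)
  also have "\<dots> \<le> 2*i+2*w - 1" by simp
  finally show ?thesis .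
qed

lemma img_card: "card (c ` window i w idx) \<le> 2*i+2*w - 1"
  using card_image_le[OF window_fin, of c i w idx] window_card[of i w idx] by linarith

lemma nodes_sub: "config_nodes c nw i w \<subseteq> (SIGMA idx:{1..nw+1}. Pow (c ` window i w idx))"
  unfolding config_nodes_def by auto

lemma nodes_card: "card (config_nodes c nw i w) \<le> (nw + 1) * 2 ^ (2 * i + 2 * w - 1)"
proof -
  have fin: "finite (SIGMA idx:{1..nw+1}. Pow (c ` window i w idx))"
    using window_fin by auto
  have "card (config_nodes c nw i w) \<le> card (SIGMA idx:{1..nw+1}. Pow (c ` window i w idx))"
    by (rule card_mono[OF fin nodes_sub])
  also have "\<dots> = (\<Sum>idx\<in>{1..nw+1}. 2 ^ card (c ` window i w idx))"
    using window_fin by (simp add: card_Pow)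
  also have "\<dots> \<le> (\<Sum>idx\<in>{1..nw+1}. 2 ^ (2 * i + 2 * w - 1))"
    by (rule sum_mono) (use img_card in \<open>auto intro: power_increasing\<close>)
  also have "\<dots> = (nw + 1) * 2 ^ (2 * i + 2 * w - 1)" by simp
  finally show ?thesis .
qed

lemma nodes_fin: "finite (config_nodes c nw i w)"
  by (rule finite_subset[OF nodes_sub]) (use window_fin in auto)

definition outs where "outs c nw i w v = {v'. (v, v') \<in> config_edges c nw i w}"

lemma edges_eq: "config_edges c nw i w = (SIGMA v:config_nodes c nw i w. outs c nw i w v)"
  unfolding outs_def config_edges_def by auto

lemma outs_card:
  assumes inj: "inj_on c {1..nw}" and v: "(idx, C) \<in> config_nodes c nw i w"
  shows "finite (outs c nw i w (idx, C)) \<and> card (outs c nw i w (idx, C)) \<le> i + w + 1"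
proof -
  have idx: "1 \<le> idx" "idx \<le> nw + 1" and Csub: "C \<subseteq> c ` window i w idx" and cC: "card C \<le> i + w"
    using v by (auto simp: config_nodes_def)
  have finC: "finite C" using Csub window_fin finite_subset by blast
  let ?H = "(\<lambda>x. (idx, C - {x})) ` C"
  have finH: "finite ?H" "card ?H \<le> card C" using finC card_image_le by auto
  have sub: "outs c nw i w (idx, C) \<subseteq> {(idx+1, C), (idx+1, C \<union> {c idx})} \<union> ?H"
    unfolding outs_def config_edges_def by auto
  have fin: "finite (outs c nw i w (idx, C))"
    by (rule finite_subset[OF sub]) (use finH in auto)
  show ?thesis
  proof (cases "idx = nw + 1")
    case True
    have "outs c nw i w (idx, C) \<subseteq> ?H"
      unfolding outs_def config_edges_def using True by auto
    then have "card (outs c nw i w (idx, C)) \<le> card ?H" by (rule card_mono[rotated]) (simp add: finH(1))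
    then show ?thesis using fin finH cC by linarith
  next
    case False
    show ?thesis
    proof (cases "card C < i + w")
      case True
      have "card (outs c nw i w (idx, C)) \<le> card ({(idx+1, C), (idx+1, C \<union> {c idx})} \<union> ?H)"
        by (rule card_mono[OF _ sub]) (simp add: finH(1))
      also have "\<dots> \<le> card {(idx+1, C), (idx+1, C \<union> {c idx})} + card ?H"
        by (rule card_Un_le)
      also have "\<dots> \<le> 2 + card C"
      proof -
        have "card {(idx+1, C), (idx+1, C \<union> {c idx})} \<le> 2"
          by (simp add: card_insert_if)
        then show ?thesis using finH(2) by linarith
      qed
      finally show ?thesis using fin True by linarith
    next
      case False2: False
      have cnot: "c idx \<notin> C"
      proof
        assume "c idx \<in> C"
        then obtain x where x: "x \<in> window i w idx" "c idx = c x" using Csub by auto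
        have "x \<in> {1..nw}" "x < idx" using x(1) window_sub[of i w idx] False idx by auto
        moreover have "idx \<in> {1..nw}" using False idx by auto
        ultimately show False using inj x(2) by (metis inj_on_def less_irrefl)
      qed
      have "(idx+1, C \<union> {c idx}) \<notin> config_nodes c nw i w"
      proof
        assume "(idx+1, C \<union> {c idx}) \<in> config_nodes c nw i w"
        then have "card (insert (c idx) C) \<le> i + w" by (simp add: config_nodes_def)
        moreover have "card (insert (c idx) C) = Suc (card C)" using cnot finC by simp
        ultimately show False using False2 cC by linarith
      qed
      then have notn: "(idx+1, C \<union> {c idx}) \<notin> config_nodes c nw i w" .
      have "outs c nw i w (idx, C) \<subseteq> insert (idx+1, C) ?H"
      proof (rule subsetI)
        fix v' assume "v' \<in> outs c nw i w (idx, C)"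
        then obtain idx' C' where v': "v' = (idx', C')"
          and e: "((idx, C), (idx', C')) \<in> config_edges c nw i w"
          by (cases v') (simp add: outs_def)
        from e have n': "(idx', C') \<in> config_nodes c nw i w"
          and d: "(idx \<le> nw \<and> idx' = idx + 1 \<and> C' = C) \<or>
                  (idx \<le> nw \<and> idx' = idx + 1 \<and> C' = C \<union> {c idx}) \<or>
                  (idx' = idx \<and> (\<exists>x\<in>C. C' = C - {x}))"
          unfolding config_edges_def by simp_all
        from d show "v' \<in> insert (idx+1, C) ?H"
        proof (elim disjE)
          assume "idx \<le> nw \<and> idx' = idx + 1 \<and> C' = C \<union> {c idx}"
          then show ?thesis using n' notn by simp
        qed (auto simp: v')
      qed
      then have "card (outs c nw i w (idx, C)) \<le> card (insert (idx+1, C) ?H)"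
        by (rule card_mono[rotated]) (simp add: finH(1))
      also have "\<dots> \<le> Suc (card ?H)" using finH(1) by (simp only: card_insert_if split: if_split) simp
      finally show ?thesis using fin finH cC by linarith
    qed
  qed
qed

theorem lemma3:
  fixes c :: "nat \<Rightarrow> 'a" and nw i w :: nat
  assumes "nw \<ge> 1" and "w \<ge> 1"
    and "inj_on c {1..nw}"
  shows "card (config_nodes c nw i w) \<le> (nw + 1) * 2 ^ (2 * i + 2 * w - 1) \<and>
         card (config_edges c nw i w) \<le> (i + w + 1) * (nw + 1) * 2 ^ (2 * i + 2 * w - 1)"
proof
  show "card (config_nodes c nw i w) \<le> (nw + 1) * 2 ^ (2 * i + 2 * w - 1)" by (rule nodes_card)
  have "card (config_edges c nw i w) = (\<Sum>v\<in>config_nodes c nw i w. card (outs c nw i w v))"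
    unfolding edges_eq using nodes_fin outs_card[OF assms(3)] by (subst card_SigmaI) auto
  also have "\<dots> \<le> (\<Sum>v\<in>config_nodes c nw i w. i + w + 1)"
    by (rule sum_mono) (use outs_card[OF assms(3)] in auto)
  also have "\<dots> = (i + w + 1) * card (config_nodes c nw i w)" by simp
  also have "\<dots> \<le> (i + w + 1) * ((nw + 1) * 2 ^ (2 * i + 2 * w - 1))"
    using nodes_card by (rule mult_le_mono2)
  finally show "card (config_edges c nw i w) \<le> (i + w + 1) * (nw + 1) * 2 ^ (2 * i + 2 * w - 1)"
    by (simp only: mult.assoc)
qed

end
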